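(* (a) Let $(F[n])_{n\in\mathbb N_0}$ with coface operators $F(\delta^k)\colon F[n-1]\to F[n]$ ($k=0,\dots,n$, $n\in\mathbb N$) be an SCO in a category $\mathcal C$. Consider the filtration $F[0]\xrightarrow{i_1}F[1]\xrightarrow{i_2}\cdots$ with $i_n:=F(\delta^n)$, and suppose it has an $\omega$-colimit $F_\infty$ with canonical morphisms $\mu_n\colon F[n]\to F_\infty$. For $n\in\mathbb N$, $k\in\mathbb N_0$ set $\alpha_k^{(n)}:=F(\delta^k)\colon F[n-1]\to F[n]$ if $k\le n$ and $\alpha_k^{(n)}:=F(\delta^n)$ if $k>n$. Then for each $k$ the family $(\alpha_k^{(n)})_{n\in\mathbb N}$ determines an adapted endomorphism $\alpha_k$ of $F_\infty$ (i.e. $\mu_{n+1}\alpha_k^{(n+1)}i_n=\mu_n\alpha_k^{(n)}$ for all $n$, and $\alpha_k$ is the unique morphism with $\alpha_k\mu_{n-1}=\mu_n\alpha_k^{(n)}$ for all $n$), and $(\alpha_k)_{k\in\mathbb N_0}$ is an SCO-system of partial shifts for this filtration (called the SCO-system canonically associated to the SCO). (b) Conversely, let $(\alpha_k)_{k\in\mathbb N_0}$ be an SCO-system of partial shifts for a filtration $(F_n,i_n)$ with $\omega$-colimit $F_\infty$ whose canonical morphisms $\mu_n\colon F_n\to F_\infty$ are all monic, with $\alpha_k$ determined by $(\alpha_k^{(n)})_{n\in\mathbb N}$. Then $F[n]:=F_n$ together with $F(\delta^k):=\alpha_k^{(n)}\colon F[n-1]\to F[n]$ for $k=0,\dots,n$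 is an SCO in $\mathcal C$, and $(\alpha_k)_{k\in\mathbb N_0}$ is the SCO-system of partial shifts canonically associated (as in (a)) to this SCO.
   Context: A semi-cosimplicial object (SCO) in a category $\mathcal C$ is a sequence $(F^n)_{n\in\mathbb N_0}$ of objects with morphisms (coface operators) $\delta^k\colon F^{n-1}\to F^n$ ($k=0,\dots,n$, $n\in\mathbb N$) satisfying the cosimplicial identities $\delta^j\delta^i=\delta^i\delta^{j-1}$ whenever $i<j$. A filtration is a sequence of objects $F_n$ ($n\in\mathbb N_0$) with morphisms $i_n\colon F_{n-1}\to F_n$; its $\omega$-colimit is $F_\infty$ with $\mu_n\colon F_n\to F_\infty$, $\mu_ni_n=\mu_{n-1}$, universal among such cones. A morphism $\alpha\colon F_\infty\to F_\infty$ is an adapted endomorphism determined by $\alpha^{(n)}\colon F_{n-1}\to F_n$ ($n\in\mathbb N$) if $\mu_{n+1}\alpha^{(n+1)}i_n=\mu_n\alpha^{(n)}$ and $\alpha\mu_{n-1}=\mu_n\alpha^{(n)}$ for all $n$. A sequence $(\alpha_k)_{k\in\mathbb N_0}$ of adapted endomorphisms for a common filtration is an SCO-system of partial shifts if (1) $\alpha_k\mu_{k-1}=\mu_{k-1}$ for each $k\in\mathbb N$, and (2) $\alpha_j\alpha_i=\alpha_i\alpha_{j-1}$ for all $i<j$ in $\mathbb N_0$. *)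

theory Defs
  imports Main
begin

text \<open>A (small) category given explicitly: objects, arrows, domain, codomain,
  composition (cmp C g f = g o f) and identities.\<close>

record ('o,'m) cat =
  Obj :: "'o set"
  Arr :: "'m set"
  cdom :: "'m \<Rightarrow> 'o"
  ccod :: "'m \<Rightarrow> 'o"
  cmp :: "'m \<Rightarrow> 'm \<Rightarrow> 'm"
  cid :: "'o \<Rightarrow> 'm"

definition Hom :: "('o,'m) cat \<Rightarrow> 'o \<Rightarrow> 'o \<Rightarrow> 'm set" where
  "Hom C a b = {f \<in> Arr C. cdom C f = a \<and> ccod C f = b}"

definition category :: "('o,'m) cat \<Rightarrow> bool" where
  "category C \<longleftrightarrow>
     (\<forall>f \<in> Arr C. cdom C f \<in> Obj C \<and> ccod C f \<in> Obj C)
   \<and> (\<forall>a \<in> Obj C. cid C a \<in> Hom C a a)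
   \<and> (\<forall>a b c f g. f \<in> Hom C a b \<longrightarrow> g \<in> Hom C b c \<longrightarrow> cmp C g f \<in> Hom C a c)
   \<and> (\<forall>f \<in> Arr C. cmp C (cid C (ccod C f)) f = f \<and> cmp C f (cid C (cdom C f)) = f)
   \<and> (\<forall>a b c d f g h. f \<in> Hom C a b \<longrightarrow> g \<in> Hom C b c \<longrightarrow> h \<in> Hom C c d \<longrightarrow>
        cmp C h (cmp C g f) = cmp C (cmp C h g) f)"

definition monic :: "('o,'m) cat \<Rightarrow> 'm \<Rightarrow> bool" where
  "monic C f \<longleftrightarrow> f \<in> Arr C \<and>
     (\<forall>g h. g \<in> Arr C \<longrightarrow> h \<in> Arr C \<longrightarrow> cdom C g = cdom C h \<longrightarrow>
        ccod C g = cdom C f \<longrightarrow> ccod C h = cdom C f \<longrightarrow> cmp C f g = cmp C f h \<longrightarrow> g = h)"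

definition sco :: "('o,'m) cat \<Rightarrow> (nat \<Rightarrow> 'o) \<Rightarrow> (nat \<Rightarrow> nat \<Rightarrow> 'm) \<Rightarrow> bool" where
  "sco C F \<delta> \<longleftrightarrow>
     (\<forall>n. F n \<in> Obj C)
   \<and> (\<forall>n k. 1 \<le> n \<longrightarrow> k \<le> n \<longrightarrow> \<delta> n k \<in> Hom C (F (n - 1)) (F n))
   \<and> (\<forall>n i j. 2 \<le> n \<longrightarrow> i < j \<longrightarrow> j \<le> n \<longrightarrow>
        cmp C (\<delta> n j) (\<delta> (n - 1) i) = cmp C (\<delta> n i) (\<delta> (n - 1) (j - 1)))"

definition filtration :: "('o,'m) cat \<Rightarrow> (nat \<Rightarrow> 'o) \<Rightarrow> (nat \<Rightarrow> 'm) \<Rightarrow> bool" where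
  "filtration C Fn inc \<longleftrightarrow>
     (\<forall>n. Fn n \<in> Obj C) \<and> (\<forall>n. 1 \<le> n \<longrightarrow> inc n \<in> Hom C (Fn (n - 1)) (Fn n))"

definition omega_colimit ::
  "('o,'m) cat \<Rightarrow> (nat \<Rightarrow> 'o) \<Rightarrow> (nat \<Rightarrow> 'm) \<Rightarrow> 'o \<Rightarrow> (nat \<Rightarrow> 'm) \<Rightarrow> bool" where
  "omega_colimit C Fn inc Finf \<mu> \<longleftrightarrow>
     filtration C Fn inc \<and> Finf \<in> Obj C
   \<and> (\<forall>n. \<mu> n \<in> Hom C (Fn n) Finf)
   \<and> (\<forall>n. 1 \<le> n \<longrightarrow> cmp C (\<mu> n) (inc n) = \<mu> (n - 1))
   \<and> (\<forall>X c. X \<in> Obj C \<longrightarrow> (\<forall>n. c n \<in> Hom C (Fn n) X) \<longrightarrow>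
        (\<forall>n. 1 \<le> n \<longrightarrow> cmp C (c n) (inc n) = c (n - 1)) \<longrightarrow>
        (\<exists>!u. u \<in> Hom C Finf X \<and> (\<forall>n. cmp C u (\<mu> n) = c n)))"

definition adapted ::
  "('o,'m) cat \<Rightarrow> (nat \<Rightarrow> 'o) \<Rightarrow> (nat \<Rightarrow> 'm) \<Rightarrow> 'o \<Rightarrow> (nat \<Rightarrow> 'm) \<Rightarrow> 'm \<Rightarrow> (nat \<Rightarrow> 'm) \<Rightarrow> bool" where
  "adapted C Fn inc Finf \<mu> \<alpha> a \<longleftrightarrow>
     \<alpha> \<in> Hom C Finf Finf
   \<and> (\<forall>n. 1 \<le> n \<longrightarrow> a n \<in> Hom C (Fn (n - 1)) (Fn n))
   \<and> (\<forall>n. 1 \<le> n \<longrightarrow> cmp C (\<mu> (n + 1)) (cmp C (a (n + 1)) (inc n)) = cmp C (\<mu> n) (a n))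
   \<and> (\<forall>n. 1 \<le> n \<longrightarrow> cmp C \<alpha> (\<mu> (n - 1)) = cmp C (\<mu> n) (a n))"

definition sco_system ::
  "('o,'m) cat \<Rightarrow> (nat \<Rightarrow> 'o) \<Rightarrow> (nat \<Rightarrow> 'm) \<Rightarrow> 'o \<Rightarrow> (nat \<Rightarrow> 'm) \<Rightarrow> (nat \<Rightarrow> 'm) \<Rightarrow> bool" where
  "sco_system C Fn inc Finf \<mu> \<alpha> \<longleftrightarrow>
     (\<forall>k. \<exists>a. adapted C Fn inc Finf \<mu> (\<alpha> k) a)
   \<and> (\<forall>k. 1 \<le> k \<longrightarrow> cmp C (\<alpha> k) (\<mu> (k - 1)) = \<mu> (k - 1))
   \<and> (\<forall>i j. i < j \<longrightarrow> cmp C (\<alpha> j) (\<alpha> i) = cmp C (\<alpha> i) (\<alpha> (j - 1)))"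

definition canon_a :: "(nat \<Rightarrow> nat \<Rightarrow> 'm) \<Rightarrow> nat \<Rightarrow> nat \<Rightarrow> 'm" where
  "canon_a \<delta> k n = (if k \<le> n then \<delta> n k else \<delta> n n)"

definition canon_assoc ::
  "('o,'m) cat \<Rightarrow> (nat \<Rightarrow> 'o) \<Rightarrow> (nat \<Rightarrow> nat \<Rightarrow> 'm) \<Rightarrow> (nat \<Rightarrow> 'o) \<Rightarrow> (nat \<Rightarrow> 'm) \<Rightarrow> 'o
     \<Rightarrow> (nat \<Rightarrow> 'm) \<Rightarrow> (nat \<Rightarrow> 'm) \<Rightarrow> bool" where
  "canon_assoc C F \<delta> Fn inc Finf \<mu> \<alpha> \<longleftrightarrow>
     Fn = F \<and> (\<forall>n. 1 \<le> n \<longrightarrow> inc n = \<delta> n n)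
   \<and> (\<forall>k. adapted C Fn inc Finf \<mu> (\<alpha> k) (canon_a \<delta> k))
   \<and> sco_system C Fn inc Finf \<mu> \<alpha>"

end

theory Submission
  imports Defs
begin

context
  fixes C :: "('o,'m) cat"
  assumes cat: "category C"
begin

lemma comp: "f \<in> Hom C a b \<Longrightarrow> g \<in> Hom C b c \<Longrightarrow> cmp C g f \<in> Hom C a c"
  using cat unfolding category_def by blast

lemma assoc: "f \<in> Hom C a b \<Longrightarrow> g \<in> Hom C b c \<Longrightarrow> h \<in> Hom C c d \<Longrightarrow>
   cmp C h (cmp C g f) = cmp C (cmp C h g) f"
  using cat unfolding category_def by blast

lemma cod_obj: "f \<in> Hom C a b \<Longrightarrow> b \<in> Obj C"
  using cat unfolding category_def Hom_def by blast

lemma colim_ext: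
  assumes col: "omega_colimit C Fn inc Finf \<mu>" and u1: "u1 \<in> Hom C Finf X" and u2: "u2 \<in> Hom C Finf X"
    and eq: "\<forall>n. cmp C u1 (\<mu> n) = cmp C u2 (\<mu> n)"
  shows "u1 = u2"
proof -
  have X: "X \<in> Obj C" using cod_obj u1 .
  have mu: "\<And>n. \<mu> n \<in> Hom C (Fn n) Finf" and cc: "\<And>n. 1\<le>n \<Longrightarrow> cmp C (\<mu> n) (inc n) = \<mu> (n-1)"
    and inc: "\<And>n. 1 \<le> n \<Longrightarrow> inc n \<in> Hom C (Fn (n-1)) (Fn n)"
    and U: "\<forall>X c. X \<in> Obj C \<longrightarrow> (\<forall>n. c n \<in> Hom C (Fn n) X) \<longrightarrow>
        (\<forall>n. 1 \<le> n \<longrightarrow> cmp C (c n) (inc n) = c (n - 1)) \<longrightarrow>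
        (\<exists>!u. u \<in> Hom C Finf X \<and> (\<forall>n. cmp C u (\<mu> n) = c n))"
    using col unfolding omega_colimit_def filtration_def by auto
  let ?c = "\<lambda>n. cmp C u1 (\<mu> n)"
  have "\<forall>n. ?c n \<in> Hom C (Fn n) X" using mu comp u1 by blast
  moreover have "\<forall>n. 1 \<le> n \<longrightarrow> cmp C (?c n) (inc n) = ?c (n-1)"
  proof (intro allI impI)
    fix n :: nat assume n: "1 \<le> n"
    then have "cmp C (?c n) (inc n) = cmp C u1 (cmp C (\<mu> n) (inc n))"
      using assoc[OF inc[OF n] mu u1] by simp
    thus "cmp C (?c n) (inc n) = ?c (n-1)" using cc n by simp
  qed
  ultimately have "\<exists>!u. u \<in> Hom C Finf X \<and> (\<forall>n. cmp C u (\<mu> n) = ?c n)"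
    using U X by (elim allE[of _ X] allE[of _ ?c]) blast
  thus ?thesis using u1 u2 eq by metis
qed

lemma monic_cancel:
  "monic C f \<Longrightarrow> g \<in> Hom C a b \<Longrightarrow> h \<in> Hom C a b \<Longrightarrow> f \<in> Hom C b c \<Longrightarrow>
   cmp C f g = cmp C f h \<Longrightarrow> g = h"
  unfolding monic_def Hom_def by auto

lemma partA:
  assumes sco: "sco C F \<delta>" and col: "omega_colimit C F (\<lambda>n. \<delta> n n) Finf \<mu>"
  shows "\<exists>\<alpha>. (\<forall>k. adapted C F (\<lambda>n. \<delta> n n) Finf \<mu> (\<alpha> k) (canon_a \<delta> k)
                     \<and> (\<forall>\<beta> \<in> Hom C Finf Finf.
                          (\<forall>n. 1 \<le> n \<longrightarrow> cmp C \<beta> (\<mu> (n - 1)) = cmp C (\<mu> n) (canon_a \<delta> k n))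
                          \<longrightarrow> \<beta> = \<alpha> k))
                 \<and> sco_system C F (\<lambda>n. \<delta> n n) Finf \<mu> \<alpha>
                 \<and> canon_assoc C F \<delta> F (\<lambda>n. \<delta> n n) Finf \<mu> \<alpha>"
proof -
  have dhom: "\<And>n k. 1\<le>n \<Longrightarrow> k\<le>n \<Longrightarrow> \<delta> n k \<in> Hom C (F(n-1)) (F n)"
    and did: "\<And>n i j. 2 \<le> n \<Longrightarrow> i < j \<Longrightarrow> j \<le> n \<Longrightarrow>
        cmp C (\<delta> n j) (\<delta> (n - 1) i) = cmp C (\<delta> n i) (\<delta> (n - 1) (j - 1))"
    using sco unfolding sco_def by auto
  have mu: "\<And>n. \<mu> n \<in> Hom C (F n) Finf" and cc: "\<And>n. 1\<le>n \<Longrightarrow> cmp C (\<mu> n) (\<delta> n n) = \<mu> (n-1)"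
    and Fo: "Finf \<in> Obj C"
    and U: "\<forall>X c. X \<in> Obj C \<longrightarrow> (\<forall>n. c n \<in> Hom C (F n) X) \<longrightarrow>
        (\<forall>n. 1 \<le> n \<longrightarrow> cmp C (c n) (\<delta> n n) = c (n - 1)) \<longrightarrow>
        (\<exists>!u. u \<in> Hom C Finf X \<and> (\<forall>n. cmp C u (\<mu> n) = c n))"
    using col unfolding omega_colimit_def by auto
  have ahom: "\<And>k n. 1 \<le> n \<Longrightarrow> canon_a \<delta> k n \<in> Hom C (F (n-1)) (F n)"
    using dhom by (simp add: canon_a_def)
  have ahom': "\<And>k n. canon_a \<delta> k (n+1) \<in> Hom C (F n) (F (n+1))"
    using ahom[of "n+1" for n] by simp
  have step: "\<And>k n. 1\<le>n \<Longrightarrow> cmp C (canon_a \<delta> k (n+1)) (\<delta> n n) = cmp C (\<delta> (n+1) (n+1)) (canon_a \<delta> k n)"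
  proof -
    fix k n :: nat assume n: "1 \<le> n"
    show "cmp C (canon_a \<delta> k (n+1)) (\<delta> n n) = cmp C (\<delta> (n+1) (n+1)) (canon_a \<delta> k n)"
    proof (cases "k \<le> n")
      case True
      then show ?thesis using did[of "n+1" k "n+1"] n by (simp add: canon_a_def)
    next
      case False
      then show ?thesis by (cases "k = Suc n") (simp_all add: canon_a_def)
    qed
  qed
  have step2: "\<And>k n. 1\<le>n \<Longrightarrow> cmp C (\<mu> (n+1)) (cmp C (canon_a \<delta> k (n+1)) (\<delta> n n)) = cmp C (\<mu> n) (canon_a \<delta> k n)"
  proof -
    fix k n :: nat assume n: "1 \<le> n"
    have d1: "\<delta> (n+1) (n+1) \<in> Hom C (F n) (F (n+1))" using dhom[of "n+1" "n+1"] by simp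
    have "cmp C (\<mu> (n+1)) (cmp C (canon_a \<delta> k (n+1)) (\<delta> n n))
        = cmp C (\<mu> (n+1)) (cmp C (\<delta> (n+1) (n+1)) (canon_a \<delta> k n))" using step n by simp
    also have "\<dots> = cmp C (cmp C (\<mu> (n+1)) (\<delta> (n+1) (n+1))) (canon_a \<delta> k n)"
      by (rule assoc[OF ahom[OF n] d1 mu])
    also have "\<dots> = cmp C (\<mu> n) (canon_a \<delta> k n)" using cc[of "n+1"] by simp
    finally show "cmp C (\<mu> (n+1)) (cmp C (canon_a \<delta> k (n+1)) (\<delta> n n)) = cmp C (\<mu> n) (canon_a \<delta> k n)" .
  qed
  define c where "c k n = cmp C (\<mu> (n+1)) (canon_a \<delta> k (n+1))" for k n
  have chom: "\<And>k n. c k n \<in> Hom C (F n) Finf" unfolding c_def using comp[OF ahom' mu] .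
  have ccoc: "\<And>k n. 1 \<le> n \<Longrightarrow> cmp C (c k n) (\<delta> n n) = c k (n-1)"
  proof -
    fix k n :: nat assume n: "1 \<le> n"
    have "cmp C (c k n) (\<delta> n n) = cmp C (\<mu> (n+1)) (cmp C (canon_a \<delta> k (n+1)) (\<delta> n n))"
      unfolding c_def using assoc[OF dhom[OF n order_refl] ahom' mu] by simp
    also have "\<dots> = cmp C (\<mu> n) (canon_a \<delta> k n)" using step2 n by simp
    finally show "cmp C (c k n) (\<delta> n n) = c k (n-1)" using n by (simp add: c_def)
  qed
  have ex1: "\<And>k. \<exists>!u. u \<in> Hom C Finf Finf \<and> (\<forall>n. cmp C u (\<mu> n) = c k n)"
    using U Fo chom ccoc by blast
  define \<alpha> where "\<alpha> k = (THE u. u \<in> Hom C Finf Finf \<and> (\<forall>n. cmp C u (\<mu> n) = c k n))" for k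
  have \<alpha>P: "\<And>k. \<alpha> k \<in> Hom C Finf Finf \<and> (\<forall>n. cmp C (\<alpha> k) (\<mu> n) = c k n)"
    unfolding \<alpha>_def using theI'[OF ex1] .
  have \<alpha>hom: "\<And>k. \<alpha> k \<in> Hom C Finf Finf" using \<alpha>P by blast
  have \<alpha>mu: "\<And>k n. cmp C (\<alpha> k) (\<mu> n) = cmp C (\<mu> (n+1)) (canon_a \<delta> k (n+1))"
    using \<alpha>P by (simp add: c_def)
  have \<alpha>uniq: "\<And>k u. u \<in> Hom C Finf Finf \<Longrightarrow> \<forall>n. cmp C u (\<mu> n) = c k n \<Longrightarrow> u = \<alpha> k"
    using ex1 \<alpha>P by blast
  have adap: "\<And>k. adapted C F (\<lambda>n. \<delta> n n) Finf \<mu> (\<alpha> k) (canon_a \<delta> k)"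
    unfolding adapted_def
  proof (intro conjI allI impI)
    fix k n :: nat
    show "\<alpha> k \<in> Hom C Finf Finf" by (rule \<alpha>hom)
    show "1 \<le> n \<Longrightarrow> canon_a \<delta> k n \<in> Hom C (F (n - 1)) (F n)" by (rule ahom)
    show "1 \<le> n \<Longrightarrow> cmp C (\<mu> (n + 1)) (cmp C (canon_a \<delta> k (n + 1)) (\<delta> n n)) = cmp C (\<mu> n) (canon_a \<delta> k n)"
      by (rule step2)
    assume "1 \<le> n"
    then show "cmp C (\<alpha> k) (\<mu> (n - 1)) = cmp C (\<mu> n) (canon_a \<delta> k n)" using \<alpha>mu[of k "n-1"] by simp
  qed
  have uniq: "\<And>k. \<forall>\<beta> \<in> Hom C Finf Finf.
                          (\<forall>n. 1 \<le> n \<longrightarrow> cmp C \<beta> (\<mu> (n - 1)) = cmp C (\<mu> n) (canon_a \<delta> k n))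
                          \<longrightarrow> \<beta> = \<alpha> k"
  proof (intro ballI impI)
    fix k \<beta> assume b: "\<beta> \<in> Hom C Finf Finf"
      and h: "\<forall>n. 1 \<le> n \<longrightarrow> cmp C \<beta> (\<mu> (n - 1)) = cmp C (\<mu> n) (canon_a \<delta> k n)"
    have "\<forall>n. cmp C \<beta> (\<mu> n) = c k n"
    proof
      fix n show "cmp C \<beta> (\<mu> n) = c k n" using h[rule_format, of "n+1"] by (simp add: c_def)
    qed
    then show "\<beta> = \<alpha> k" using \<alpha>uniq b by blast
  qed
  have canon_comm: "\<And>i j N. 2 \<le> N \<Longrightarrow> i < j \<Longrightarrow>
     cmp C (canon_a \<delta> j N) (canon_a \<delta> i (N-1)) = cmp C (canon_a \<delta> i N) (canon_a \<delta> (j-1) (N-1))"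
  proof -
    fix i j N :: nat assume N: "2 \<le> N" and ij: "i < j"
    show "cmp C (canon_a \<delta> j N) (canon_a \<delta> i (N-1)) = cmp C (canon_a \<delta> i N) (canon_a \<delta> (j-1) (N-1))"
    proof (cases "j \<le> N")
      case True
      have f: "i \<le> N - 1" "j - 1 \<le> N - 1" "i \<le> N" using True ij by auto
      have "canon_a \<delta> j N = \<delta> N j" "canon_a \<delta> i (N-1) = \<delta> (N-1) i"
        "canon_a \<delta> i N = \<delta> N i" "canon_a \<delta> (j-1) (N-1) = \<delta> (N-1) (j-1)"
        using f True unfolding canon_a_def by simp_all
      then show ?thesis using did[OF N ij True] by simp
    next
      case False
      show ?thesis
      proof (cases "i < N")
        case True
        have f: "i \<le> N - 1" "\<not> j - 1 \<le> N - 1" "i \<le> N" using True False ij by auto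
        have "canon_a \<delta> j N = \<delta> N N" "canon_a \<delta> i (N-1) = \<delta> (N-1) i"
          "canon_a \<delta> i N = \<delta> N i" "canon_a \<delta> (j-1) (N-1) = \<delta> (N-1) (N-1)"
          using f False unfolding canon_a_def by simp_all
        then show ?thesis using did[OF N True order_refl] by simp
      next
        case F2: False
        then show ?thesis using False ij by (simp add: canon_a_def)
      qed
    qed
  qed
  have twostep: "\<And>i j n. cmp C (cmp C (\<alpha> j) (\<alpha> i)) (\<mu> n)
      = cmp C (\<mu> (n+2)) (cmp C (canon_a \<delta> j (n+2)) (canon_a \<delta> i (n+1)))"
  proof -
    fix i j n :: nat
    have a2: "canon_a \<delta> j (n+2) \<in> Hom C (F (n+1)) (F (n+2))" using ahom'[of j "n+1"] by simp
    have "cmp C (cmp C (\<alpha> j) (\<alpha> i)) (\<mu> n) = cmp C (\<alpha> j) (cmp C (\<alpha> i) (\<mu> n))"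
      using assoc[OF mu \<alpha>hom \<alpha>hom] by simp
    also have "\<dots> = cmp C (\<alpha> j) (cmp C (\<mu> (n+1)) (canon_a \<delta> i (n+1)))" using \<alpha>mu by simp
    also have "\<dots> = cmp C (cmp C (\<alpha> j) (\<mu> (n+1))) (canon_a \<delta> i (n+1))"
      using assoc[OF ahom' mu \<alpha>hom] by simp
    also have "\<dots> = cmp C (cmp C (\<mu> (n+2)) (canon_a \<delta> j (n+2))) (canon_a \<delta> i (n+1))"
      using \<alpha>mu[of j "n+1"] by simp
    also have "\<dots> = cmp C (\<mu> (n+2)) (cmp C (canon_a \<delta> j (n+2)) (canon_a \<delta> i (n+1)))"
      using assoc[OF ahom' a2 mu] by simp
    finally show "cmp C (cmp C (\<alpha> j) (\<alpha> i)) (\<mu> n)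
      = cmp C (\<mu> (n+2)) (cmp C (canon_a \<delta> j (n+2)) (canon_a \<delta> i (n+1)))" .
  qed
  have ss: "sco_system C F (\<lambda>n. \<delta> n n) Finf \<mu> \<alpha>"
    unfolding sco_system_def
  proof (intro conjI allI impI)
    fix k show "\<exists>a. adapted C F (\<lambda>n. \<delta> n n) Finf \<mu> (\<alpha> k) a" using adap by blast
  next
    fix k :: nat assume k: "1 \<le> k"
    have "cmp C (\<alpha> k) (\<mu> (k - 1)) = cmp C (\<mu> k) (canon_a \<delta> k k)" using \<alpha>mu[of k "k-1"] k by simp
    also have "\<dots> = \<mu> (k-1)" using cc k by (simp add: canon_a_def)
    finally show "cmp C (\<alpha> k) (\<mu> (k - 1)) = \<mu> (k - 1)" .
  next
    fix i j :: nat assume ij: "i < j"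
    show "cmp C (\<alpha> j) (\<alpha> i) = cmp C (\<alpha> i) (\<alpha> (j - 1))"
    proof (rule colim_ext[OF col])
      show "cmp C (\<alpha> j) (\<alpha> i) \<in> Hom C Finf Finf" using comp \<alpha>hom by blast
      show "cmp C (\<alpha> i) (\<alpha> (j - 1)) \<in> Hom C Finf Finf" using comp \<alpha>hom by blast
      show "\<forall>n. cmp C (cmp C (\<alpha> j) (\<alpha> i)) (\<mu> n) = cmp C (cmp C (\<alpha> i) (\<alpha> (j - 1))) (\<mu> n)"
      proof
        fix n
        show "cmp C (cmp C (\<alpha> j) (\<alpha> i)) (\<mu> n) = cmp C (cmp C (\<alpha> i) (\<alpha> (j - 1))) (\<mu> n)"
          using twostep[of j i n] twostep[of i "j-1" n] canon_comm[of "n+2" i j] ij by simp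
      qed
    qed
  qed
  have ca: "canon_assoc C F \<delta> F (\<lambda>n. \<delta> n n) Finf \<mu> \<alpha>"
    unfolding canon_assoc_def using adap ss by blast
  show ?thesis using adap uniq ss ca by blast
qed

lemma partB:
  assumes col: "omega_colimit C Fn inc Finf \<mu>" and mono: "\<forall>n. monic C (\<mu> n)"
    and ad: "\<forall>k. adapted C Fn inc Finf \<mu> (\<alpha> k) (a k)"
    and ss: "sco_system C Fn inc Finf \<mu> \<alpha>"
  shows "sco C Fn (\<lambda>n k. a k n) \<and> canon_assoc C Fn (\<lambda>n k. a k n) Fn inc Finf \<mu> \<alpha>"
proof -
  have ahom: "\<And>k n. 1\<le>n \<Longrightarrow> a k n \<in> Hom C (Fn (n-1)) (Fn n)"
    and a\<mu>: "\<And>k n. 1\<le>n \<Longrightarrow> cmp C (\<alpha> k) (\<mu> (n-1)) = cmp C (\<mu> n) (a k n)"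
    and \<alpha>hom: "\<And>k. \<alpha> k \<in> Hom C Finf Finf"
    using ad unfolding adapted_def by auto
  have fix1: "\<And>k. 1\<le>k \<Longrightarrow> cmp C (\<alpha> k) (\<mu> (k-1)) = \<mu> (k-1)"
    and com: "\<And>i j. i<j \<Longrightarrow> cmp C (\<alpha> j) (\<alpha> i) = cmp C (\<alpha> i) (\<alpha> (j-1))"
    using ss unfolding sco_system_def by auto
  have mu: "\<And>n. \<mu> n \<in> Hom C (Fn n) Finf" and cc: "\<And>n. 1\<le>n \<Longrightarrow> cmp C (\<mu> n) (inc n) = \<mu> (n-1)"
    and inc: "\<And>n. 1 \<le> n \<Longrightarrow> inc n \<in> Hom C (Fn (n-1)) (Fn n)"
    and Fo: "\<And>n. Fn n \<in> Obj C"
    using col unfolding omega_colimit_def filtration_def by auto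
  have gen: "\<And>i j n. 2 \<le> n \<Longrightarrow> cmp C (\<mu> n) (cmp C (a j n) (a i (n-1))) = cmp C (cmp C (\<alpha> j) (\<alpha> i)) (\<mu> (n-2))"
  proof -
    fix i j n :: nat assume n: "2 \<le> n"
    have n1: "1 \<le> n" "1 \<le> n - 1" using n by auto
    have ai: "a i (n-1) \<in> Hom C (Fn (n-2)) (Fn (n-1))" using ahom[OF n1(2), of i] by (simp add: numeral_2_eq_2)
    have "cmp C (\<mu> n) (cmp C (a j n) (a i (n-1))) = cmp C (cmp C (\<mu> n) (a j n)) (a i (n-1))"
      using assoc[OF ai ahom[OF n1(1)] mu] by simp
    also have "\<dots> = cmp C (cmp C (\<alpha> j) (\<mu> (n-1))) (a i (n-1))" using a\<mu>[OF n1(1)] by simp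
    also have "\<dots> = cmp C (\<alpha> j) (cmp C (\<mu> (n-1)) (a i (n-1)))" using assoc[OF ai mu \<alpha>hom] by simp
    also have "\<dots> = cmp C (\<alpha> j) (cmp C (\<alpha> i) (\<mu> (n-2)))" using a\<mu>[OF n1(2), of i] by (simp add: numeral_2_eq_2)
    also have "\<dots> = cmp C (cmp C (\<alpha> j) (\<alpha> i)) (\<mu> (n-2))" using assoc[OF mu \<alpha>hom \<alpha>hom] by simp
    finally show "cmp C (\<mu> n) (cmp C (a j n) (a i (n-1))) = cmp C (cmp C (\<alpha> j) (\<alpha> i)) (\<mu> (n-2))" .
  qed
  have sco: "sco C Fn (\<lambda>n k. a k n)"
    unfolding sco_def
  proof (intro conjI allI impI)
    fix n show "Fn n \<in> Obj C" by (rule Fo)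
  next
    fix n k :: nat assume "1 \<le> n" "k \<le> n" then show "a k n \<in> Hom C (Fn (n - 1)) (Fn n)" using ahom by simp
  next
    fix n i j :: nat assume n: "2 \<le> n" and ij: "i < j" and jn: "j \<le> n"
    have n1: "1 \<le> n" "1 \<le> n - 1" using n by auto
    have h: "\<And>p q. cmp C (a p n) (a q (n-1)) \<in> Hom C (Fn (n-2)) (Fn n)"
      using comp[OF ahom[OF n1(2)] ahom[OF n1(1)]] by (simp add: numeral_2_eq_2)
    show "cmp C (a j n) (a i (n - 1)) = cmp C (a i n) (a (j - 1) (n - 1))"
      using monic_cancel[OF mono[rule_format, of n] h h mu] gen[OF n] com[OF ij] by metis
  qed
  have incd: "\<And>n. 1 \<le> n \<Longrightarrow> inc n = a n n"
  proof -
    fix n :: nat assume n: "1 \<le> n"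
    have "cmp C (\<mu> n) (inc n) = cmp C (\<mu> n) (a n n)" using cc[OF n] a\<mu>[OF n] fix1[OF n] by simp
    then show "inc n = a n n" using monic_cancel[OF mono[rule_format, of n] inc[OF n] ahom[OF n] mu] by blast
  qed
  have low: "\<And>d k m. 1 \<le> k \<Longrightarrow> m + d = k - 1 \<Longrightarrow> cmp C (\<alpha> k) (\<mu> m) = \<mu> m"
  proof -
    fix d k m :: nat
    show "1 \<le> k \<Longrightarrow> m + d = k - 1 \<Longrightarrow> cmp C (\<alpha> k) (\<mu> m) = \<mu> m"
    proof (induction d arbitrary: m)
      case 0
      then show ?case using fix1 by simp
    next
      case (Suc d)
      then have IH: "cmp C (\<alpha> k) (\<mu> (m+1)) = \<mu> (m+1)" by simp
      have i1: "inc (m+1) \<in> Hom C (Fn m) (Fn (m+1))" using inc[of "m+1"] by simp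
      have "\<mu> m = cmp C (\<mu> (m+1)) (inc (m+1))" using cc[of "m+1"] by simp
      then have "cmp C (\<alpha> k) (\<mu> m) = cmp C (cmp C (\<alpha> k) (\<mu> (m+1))) (inc (m+1))"
        using assoc[OF i1 mu \<alpha>hom] by simp
      then show ?case using IH cc[of "m+1"] by simp
    qed
  qed
  have high: "\<And>k n. 1 \<le> n \<Longrightarrow> n < k \<Longrightarrow> a k n = a n n"
  proof -
    fix k n :: nat assume n: "1 \<le> n" and nk: "n < k"
    have "cmp C (\<mu> n) (a k n) = \<mu> (n-1)" using a\<mu>[OF n, of k] low[of k "n-1" "k-1-(n-1)"] n nk by simp
    then have "cmp C (\<mu> n) (a k n) = cmp C (\<mu> n) (inc n)" using cc[OF n] by simp
    then have "a k n = inc n" using monic_cancel[OF mono[rule_format, of n] ahom[OF n] inc[OF n] mu] by blast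
    then show "a k n = a n n" using incd n by simp
  qed
  have ceq: "\<And>k n. 1 \<le> n \<Longrightarrow> canon_a (\<lambda>n k. a k n) k n = a k n"
    unfolding canon_a_def using high by auto
  have adc: "\<And>k. adapted C Fn inc Finf \<mu> (\<alpha> k) (canon_a (\<lambda>n k. a k n) k)"
  proof -
    fix k
    have "adapted C Fn inc Finf \<mu> (\<alpha> k) (a k)" using ad by blast
    then show "adapted C Fn inc Finf \<mu> (\<alpha> k) (canon_a (\<lambda>n k. a k n) k)"
      unfolding adapted_def using ceq by simp
  qed
  have "canon_assoc C Fn (\<lambda>n k. a k n) Fn inc Finf \<mu> \<alpha>"
    unfolding canon_assoc_def using incd adc ss by simp
  then show ?thesis using sco by blast
qed

end

theorem mainTheorem3:
  fixes C :: "('o,'m) cat"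
  assumes "category C"
  shows "(\<forall>(F :: nat \<Rightarrow> 'o) \<delta> Finf \<mu>.
           sco C F \<delta> \<and> omega_colimit C F (\<lambda>n. \<delta> n n) Finf \<mu> \<longrightarrow>
           (\<exists>\<alpha>. (\<forall>k. adapted C F (\<lambda>n. \<delta> n n) Finf \<mu> (\<alpha> k) (canon_a \<delta> k)
                     \<and> (\<forall>\<beta> \<in> Hom C Finf Finf.
                          (\<forall>n. 1 \<le> n \<longrightarrow> cmp C \<beta> (\<mu> (n - 1)) = cmp C (\<mu> n) (canon_a \<delta> k n))
                          \<longrightarrow> \<beta> = \<alpha> k))
                 \<and> sco_system C F (\<lambda>n. \<delta> n n) Finf \<mu> \<alpha>
                 \<and> canon_assoc C F \<delta> F (\<lambda>n. \<delta> n n) Finf \<mu> \<alpha>))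
       \<and> (\<forall>(Fn :: nat \<Rightarrow> 'o) inc Finf \<mu> \<alpha> a.
           omega_colimit C Fn inc Finf \<mu> \<and> (\<forall>n. monic C (\<mu> n))
           \<and> (\<forall>k. adapted C Fn inc Finf \<mu> (\<alpha> k) (a k))
           \<and> sco_system C Fn inc Finf \<mu> \<alpha> \<longrightarrow>
           sco C Fn (\<lambda>n k. a k n) \<and> canon_assoc C Fn (\<lambda>n k. a k n) Fn inc Finf \<mu> \<alpha>)"
  using partA[OF assms] partB[OF assms] by blast

end
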